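(* Let $d\ge 3$, $m=d$, $\lambda>0$, $w_\star,v\in\mathbb{S}^{d-1}$ with $v^\top w_\star=0$, $Q=I_d+\lambda vv^\top$, $P_\perp=I_d-w_\star w_\star^\top-vv^\top$. Let $\mathcal L(W)=\mathbb{E}\big(y-\sum_{j=1}^m(w_j^\top x)^2\big)^2$ with $x\sim\mathcal N(0,Q)$, $y=(x^\top w_\star)^2+\nu$, $\nu\sim\mathcal N(0,\sigma^2)$ independent of $x$. Consider the spectral gradient flow $\dot W(t)=-\mathrm{polar}(\nabla_W\mathcal L(W(t)))$ and suppose $M(t):=W(t)W(t)^\top=a(t)\,w_\star w_\star^\top+b(t)\,vv^\top+c(t)\,P_\perp$ with $a,b,c\ge 0$. Let $r:=a+(1+\lambda)b+(d-2)c$ and \[ g_{w_\star}=8(a-1)+4(r-1),\quad g_v=8(1+\lambda)^2 b+4(1+\lambda)(r-1),\quad g_\perp=8c+4(r-1). \] Then \[ \dot a=-2\,\mathrm{sgn}(g_{w_\star})\sqrt a,\qquad \dot b=-2\,\mathrm{sgn}(g_v)\sqrt b,\qquad \dot c=-2\,\mathrm{sgn}(g_\perp)\sqrt c, \] with the convention $\mathrm{sgn}(0)=0$. Equivalently, with $\alpha=\sqrt a$, $\beta=\sqrt b$, $\gamma=\sqrt c$: $\dot\alpha=-\mathrm{sgn}(g_{w_\star})$, $\dot\beta=-\mathrm{sgn}(g_v)$, $\dot\gamma=-\mathrm{sgn}(g_\perp)$.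
   Context: For a matrix $A$, $\mathrm{polar}(A):=A(A^\top A)^{-1/2}$ with $(\cdot)^{-1/2}$ in the Moore–Penrose sense. *)

theory Defs
  imports "HOL-Analysis.Analysis" "HOL-Probability.Probability"
begin

definition outer :: "real^'n \<Rightarrow> real^'n \<Rightarrow> real^'n^'n" where
  "outer u v = (\<chi> i j. u $ i * v $ j)"

definition psd :: "real^'n^'n \<Rightarrow> bool" where
  "psd S \<longleftrightarrow> transpose S = S \<and> (\<forall>x. 0 \<le> x \<bullet> (S *v x))"

definition psd_sqrt :: "real^'n^'n \<Rightarrow> real^'n^'n" where
  "psd_sqrt S = (THE R. psd R \<and> R ** R = S)"

definition pinv :: "real^'n^'n \<Rightarrow> real^'n^'n" where
  "pinv A = (THE X. A ** X ** A = A \<and> X ** A ** X = X \<and>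
                    transpose (A ** X) = A ** X \<and> transpose (X ** A) = X ** A)"

definition polar :: "real^'m^'n \<Rightarrow> real^'m^'n" where
  "polar A = A ** pinv (psd_sqrt (transpose A ** A))"

definition grad :: "('a::real_inner \<Rightarrow> real) \<Rightarrow> 'a \<Rightarrow> 'a" where
  "grad f x = (THE G. (f has_derivative (\<lambda>h. G \<bullet> h)) (at x))"

text \<open>Population loss: x = Q^{1/2} z with z standard Gaussian on R^d (so x ~ N(0,Q)),
  noise nu = sigma * s with s standard Gaussian independent of z (so nu ~ N(0,sigma^2)),
  y = (x^T w_star)^2 + nu, prediction sum_j (w_j^T x)^2 over the columns w_j of W.\<close>
definition pop_loss :: "real \<Rightarrow> real^'n^'n \<Rightarrow> real^'n \<Rightarrow> real^'m^'n \<Rightarrow> real" where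
  "pop_loss \<sigma> Q wstar W =
     (\<integral>z. (\<Prod>i\<in>UNIV. std_normal_density (z $ i)) *
        (\<integral>s. std_normal_density s *
            (((psd_sqrt Q *v z) \<bullet> wstar)\<^sup>2 + \<sigma> * s
              - (\<Sum>j\<in>UNIV. (column j W \<bullet> (psd_sqrt Q *v z))\<^sup>2))\<^sup>2 \<partial>lborel) \<partial>lborel)"

end

theory Submission
  imports Defs
begin

lemma matrix_add_rdistrib: "((B + C) ** A) = (B ** A) + (C ** A)"
  by (vector matrix_matrix_mult_def sum.distrib[symmetric] field_simps)
lemma matrix_diff_ldistrib: "(A ** (B - C)) = (A ** B) - (A ** (C::'a::ring_1^_^_))"
  by (vector matrix_matrix_mult_def sum_subtractf[symmetric] field_simps)
lemma matrix_diff_rdistrib: "((B - C) ** A) = (B ** A) - (C ** (A::'a::ring_1^_^_))"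
  by (vector matrix_matrix_mult_def sum_subtractf[symmetric] field_simps)

lemma sym_inner: fixes R :: "real^'n^'n"
  assumes "transpose R = R" shows "x \<bullet> (R *v y) = (R *v x) \<bullet> y"
proof -
  have "x \<bullet> (R *v y) = (x v* R) \<bullet> y" by (simp add: dot_lmul_matrix)
  also have "x v* R = R *v x" using vector_transpose_matrix[of x R] assms by simp
  finally show ?thesis .
qed

lemma psd_zero: fixes R :: "real^'n^'n"
  assumes "psd R" "y \<bullet> (R *v y) = 0" shows "R *v y = 0"
proof -
  have sym: "transpose R = R" and pos: "\<And>x. 0 \<le> x \<bullet> (R *v x)" using assms(1) psd_def by auto
  define z where "z = R *v y"
  define q where "q = z \<bullet> z"
  define c where "c = z \<bullet> (R *v z)"
  have c0: "c \<ge> 0" using pos c_def by auto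
  have q0: "q \<ge> 0" unfolding q_def by simp
  have yz: "y \<bullet> (R *v z) = q" using sym_inner[OF sym, of y z] by (simp add: q_def z_def)
  have zy: "z \<bullet> (R *v y) = q" by (simp add: q_def z_def)
  define t where "t = - q / (c + 1)"
  have "0 \<le> (y + t *\<^sub>R z) \<bullet> (R *v (y + t *\<^sub>R z))" using pos by blast
  also have "\<dots> = y \<bullet> (R *v y) + t * (y \<bullet> (R *v z)) + t * (z \<bullet> (R *v y)) + t * t * c"
    by (simp add: matrix_vector_right_distrib matrix_vector_mult_scaleR inner_add_left inner_add_right c_def algebra_simps)
  also have "\<dots> = 2 * t * q + t * t * c" using assms(2) yz zy by simp
  finally have ineq: "0 \<le> 2 * t * q + t * t * c" .
  have "q = 0"
  proof (rule ccontr)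
    assume "q \<noteq> 0" then have qp: "q > 0" using q0 by simp
    have cp: "c + 1 > 0" using c0 by simp
    have tc: "t*(c+1) = -q" using cp unfolding t_def by simp
    have "(c+1)*(c+1)*(2 * t * q + t * t * c) = 2*q*(c+1)*(t*(c+1)) + c*(t*(c+1))*(t*(c+1))"
      by (simp add: algebra_simps)
    also have "\<dots> = - (q * q * (c + 2))" unfolding tc by (simp add: algebra_simps)
    finally have "(c+1)*(c+1)*(2 * t * q + t * t * c) = - (q * q * (c + 2))" .
    moreover have "(c+1)*(c+1)*(2 * t * q + t * t * c) \<ge> 0" using ineq cp by simp
    moreover have "q * q * (c + 2) > 0" using qp c0 by simp
    ultimately show False by linarith
  qed
  then show ?thesis unfolding q_def z_def by simp
qed

lemma mat_axis_component: "(A *v axis i 1) $ j = (A $ j $ i :: real)"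
  by (simp add: matrix_vector_mult_def axis_def if_distrib if_distribR cong: if_cong)

lemma mat_eq_zero_cols: fixes A :: "real^'n^'m"
  assumes "\<And>i. A *v axis i 1 = 0" shows "A = 0"
proof -
  have "A$j$i = 0" for i j by (metis assms mat_axis_component zero_index)
  then show ?thesis by (simp add: vec_eq_iff)
qed

lemma trace_quad: fixes D R :: "real^'n^'n"
  assumes "transpose D = D"
  shows "trace (D ** R ** D) = (\<Sum>i\<in>UNIV. (D *v axis i 1) \<bullet> (R *v (D *v axis i 1)))"
proof -
  have "(D ** R ** D) $ i $ i = (D *v axis i 1) \<bullet> (R *v (D *v axis i 1))" for i
  proof -
    have "(D ** R ** D) $ i $ i = axis i 1 \<bullet> ((D ** R ** D) *v axis i 1)"
      by (simp add: inner_axis' mat_axis_component)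
    also have "\<dots> = axis i 1 \<bullet> (D *v (R *v (D *v axis i 1)))"
      by (simp add: matrix_vector_mul_assoc matrix_mul_assoc)
    also have "\<dots> = (D *v axis i 1) \<bullet> (R *v (D *v axis i 1))"
      using sym_inner[OF assms] by simp
    finally show ?thesis .
  qed
  then show ?thesis by (simp add: trace_def)
qed

lemma sym_sq_zero: fixes D :: "real^'n^'n"
  assumes "transpose D = D" "D ** D = 0" shows "D = 0"
proof -
  have "\<And>i. (\<Sum>k\<in>UNIV. (D$i$k)^2) = 0"
  proof -
    fix i
    have "(D ** D) $ i $ i = (\<Sum>k\<in>UNIV. D$i$k * D$k$i)" by (simp add: matrix_matrix_mult_def)
    moreover have "D$k$i = D$i$k" for k using assms(1) by (metis transpose_def vec_lambda_beta)
    ultimately show "(\<Sum>k\<in>UNIV. (D$i$k)^2) = 0" using assms(2) by (simp add: power2_eq_square)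
  qed
  then have "\<And>i k. D$i$k = 0" by (simp add: sum_nonneg_eq_0_iff)
  then show ?thesis by (simp add: vec_eq_iff)
qed

lemma psd_unique: fixes R R' :: "real^'n^'n"
  assumes p: "psd R" and p': "psd R'" and eq: "R ** R = R' ** R'"
  shows "R = R'"
proof -
  have sR: "transpose R = R" and sR': "transpose R' = R'" using p p' psd_def by auto
  define D where "D = R - R'"
  have sD: "transpose D = D" unfolding D_def using sR sR' by (simp add: transpose_def vec_eq_iff)
  have "R ** D + D ** R' = 0" unfolding D_def using eq
    by (simp add: matrix_diff_ldistrib matrix_diff_rdistrib)
  then have "D ** (R ** D + D ** R') = 0" by simp
  then have e: "D ** R ** D + D ** D ** R' = 0" by (simp add: matrix_add_ldistrib matrix_mul_assoc)
  have "trace (D ** D ** R') = trace (D ** R' ** D)"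
    by (metis matrix_mul_assoc trace_mul_sym)
  then have "trace (D ** R ** D) + trace (D ** R' ** D) = 0"
    using e trace_add by (metis trace_0 mat_0)
  then have "(\<Sum>i\<in>UNIV. (D *v axis i 1) \<bullet> (R *v (D *v axis i 1))) + (\<Sum>i\<in>UNIV. (D *v axis i 1) \<bullet> (R' *v (D *v axis i 1))) = 0"
    using trace_quad[OF sD] by simp
  moreover have "\<And>x. 0 \<le> x \<bullet> (R *v x)" "\<And>x. 0 \<le> x \<bullet> (R' *v x)" using p p' psd_def by auto
  ultimately have "(\<Sum>i\<in>UNIV. (D *v axis i 1) \<bullet> (R *v (D *v axis i 1))) = 0"
     "(\<Sum>i\<in>UNIV. (D *v axis i 1) \<bullet> (R' *v (D *v axis i 1))) = 0"
    by (smt (verit) sum_nonneg)+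
  then have z1: "\<And>i. (D *v axis i 1) \<bullet> (R *v (D *v axis i 1)) = 0"
    and z2: "\<And>i. (D *v axis i 1) \<bullet> (R' *v (D *v axis i 1)) = 0"
    using sum_nonneg_eq_0_iff[of UNIV "\<lambda>i. (D *v axis i 1) \<bullet> (R *v (D *v axis i 1))"]
      sum_nonneg_eq_0_iff[of UNIV "\<lambda>i. (D *v axis i 1) \<bullet> (R' *v (D *v axis i 1))"]
      \<open>\<And>x. 0 \<le> x \<bullet> (R *v x)\<close> \<open>\<And>x. 0 \<le> x \<bullet> (R' *v x)\<close> by auto
  have "R ** D = 0" using psd_zero[OF p z1] by (intro mat_eq_zero_cols) (simp add: matrix_vector_mul_assoc)
  moreover have "R' ** D = 0" using psd_zero[OF p' z2] by (intro mat_eq_zero_cols) (simp add: matrix_vector_mul_assoc)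
  ultimately have "D ** D = 0" unfolding D_def by (simp add: matrix_diff_rdistrib)
  then have "D = 0" using sym_sq_zero sD by blast
  then show ?thesis unfolding D_def by simp
qed

lemma psd_sqrt_eq: assumes "psd R" "R ** R = S" shows "psd_sqrt S = R"
  unfolding psd_sqrt_def
proof (rule the_equality)
  show "psd R \<and> R ** R = S" using assms by simp
  fix R' assume "psd R' \<and> R' ** R' = S"
  then show "R' = R" using psd_unique[of R' R] assms by simp
qed

lemma pinv_unique: fixes A X Y :: "real^'n^'n"
  assumes X1: "A ** X ** A = A" and X2: "X ** A ** X = X" and X3: "transpose (A ** X) = A ** X"
    and X4: "transpose (X ** A) = X ** A"
    and Y1: "A ** Y ** A = A" and Y2: "Y ** A ** Y = Y" and Y3: "transpose (A ** Y) = A ** Y"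
    and Y4: "transpose (Y ** A) = Y ** A"
  shows "X = Y"
proof -
  have "A ** X = transpose (A ** X)" using X3 by simp
  also have "\<dots> = transpose X ** transpose (A ** Y ** A)" using Y1 by (simp add: matrix_transpose_mul)
  also have "\<dots> = transpose (A ** X) ** transpose (A ** Y)" by (simp add: matrix_transpose_mul matrix_mul_assoc)
  also have "\<dots> = (A ** X ** A) ** Y" using X3 Y3 by (simp add: matrix_mul_assoc)
  also have "\<dots> = A ** Y" using X1 by simp
  finally have AX: "A ** X = A ** Y" .
  have "X ** A = transpose (X ** A)" using X4 by simp
  also have "\<dots> = transpose (A ** Y ** A) ** transpose X" using Y1 by (simp add: matrix_transpose_mul)
  also have "\<dots> = transpose (Y ** A) ** transpose (X ** A)" by (simp add: matrix_transpose_mul matrix_mul_assoc)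
  also have "\<dots> = Y ** (A ** X ** A)" using X4 Y4 by (simp add: matrix_mul_assoc)
  also have "\<dots> = Y ** A" using X1 by simp
  finally have XA: "X ** A = Y ** A" .
  have "X = X ** (A ** X)" using X2 by (simp add: matrix_mul_assoc)
  also have "\<dots> = X ** (A ** Y)" using AX by simp
  also have "\<dots> = (X ** A) ** Y" by (simp add: matrix_mul_assoc)
  also have "\<dots> = Y ** A ** Y" using XA by simp
  also have "\<dots> = Y" using Y2 by simp
  finally show ?thesis .
qed

lemma pinv_eq: fixes A X :: "real^'n^'n"
  assumes "A ** X ** A = A" "X ** A ** X = X" "transpose (A ** X) = A ** X" "transpose (X ** A) = X ** A"
  shows "pinv A = X"
  unfolding pinv_def
proof (rule the_equality)
  show "A ** X ** A = A \<and> X ** A ** X = X \<and> transpose (A ** X) = A ** X \<and> transpose (X ** A) = X ** A"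
    using assms by simp
  fix Y assume "A ** Y ** A = A \<and> Y ** A ** Y = Y \<and> transpose (A ** Y) = A ** Y \<and> transpose (Y ** A) = Y ** A"
  then show "Y = X" using pinv_unique[of A Y X] assms by blast
qed

definition P3 :: "real^'n \<Rightarrow> real^'n \<Rightarrow> real \<Rightarrow> real \<Rightarrow> real \<Rightarrow> real^'n^'n" where
  "P3 w v x y z = x *\<^sub>R outer w w + y *\<^sub>R outer v v + z *\<^sub>R (mat 1 - outer w w - outer v v)"

lemma outer_mv: "outer u u' *v x = (u' \<bullet> x) *\<^sub>R u"
  by (simp add: vec_eq_iff outer_def matrix_vector_mult_def inner_vec_def sum_distrib_left mult_ac)

lemma transpose_outer: "transpose (outer u u') = outer u' u"
  by (simp add: vec_eq_iff outer_def transpose_def mult.commute)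

lemma mat_mv_scaleR: "(k *\<^sub>R A) *v x = k *\<^sub>R (A *v (x::real^_))"
  by (simp add: vec_eq_iff matrix_vector_mult_def sum_distrib_left mult_ac)

lemma mat_mv_add: "(A + B) *v x = A *v x + B *v (x::real^_)"
  by (simp add: matrix_vector_mult_add_rdistrib)

lemma mat_mv_diff: "(A - B) *v x = A *v x - B *v (x::real^_)"
  by (simp add: matrix_vector_mult_diff_rdistrib)

lemma P3_mv: "P3 w v x y z *v u = (x * (w \<bullet> u)) *\<^sub>R w + (y * (v \<bullet> u)) *\<^sub>R v
     + z *\<^sub>R (u - (w \<bullet> u) *\<^sub>R w - (v \<bullet> u) *\<^sub>R v)"
  by (simp add: P3_def mat_mv_add mat_mv_diff mat_mv_scaleR outer_mv)

locale ON =
  fixes w v :: "real^'n"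
  assumes ww: "w \<bullet> w = 1" and vv: "v \<bullet> v = 1" and wv: "w \<bullet> v = 0"
begin

lemma vw: "v \<bullet> w = 0" using wv by (simp add: inner_commute)

lemma P3_inner_w: "w \<bullet> (P3 w v x y z *v u) = x * (w \<bullet> u)"
  by (simp add: P3_mv inner_add_right inner_diff_right ww wv vw algebra_simps)
lemma P3_inner_v: "v \<bullet> (P3 w v x y z *v u) = y * (v \<bullet> u)"
  by (simp add: P3_mv inner_add_right inner_diff_right vv wv vw algebra_simps)
lemma P3_perp: "P3 w v x y z *v u - (w \<bullet> (P3 w v x y z *v u)) *\<^sub>R w - (v \<bullet> (P3 w v x y z *v u)) *\<^sub>R v
   = z *\<^sub>R (u - (w \<bullet> u) *\<^sub>R w - (v \<bullet> u) *\<^sub>R v)"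
  unfolding P3_inner_w P3_inner_v by (simp add: P3_mv algebra_simps)

lemma P3_mult: "P3 w v x y z ** P3 w v x' y' z' = P3 w v (x*x') (y*y') (z*z')"
proof -
  have "(P3 w v x y z ** P3 w v x' y' z') *v u = P3 w v (x*x') (y*y') (z*z') *v u" for u
  proof -
    let ?u = "P3 w v x' y' z' *v u"
    have "(P3 w v x y z ** P3 w v x' y' z') *v u = P3 w v x y z *v ?u"
      by (simp add: matrix_vector_mul_assoc)
    also have "\<dots> = (x * (w \<bullet> ?u)) *\<^sub>R w + (y * (v \<bullet> ?u)) *\<^sub>R v
     + z *\<^sub>R (?u - (w \<bullet> ?u) *\<^sub>R w - (v \<bullet> ?u) *\<^sub>R v)" by (rule P3_mv)
    also have "\<dots> = (x * (x' * (w \<bullet> u))) *\<^sub>R w + (y * (y' * (v \<bullet> u))) *\<^sub>R v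
     + z *\<^sub>R (z' *\<^sub>R (u - (w \<bullet> u) *\<^sub>R w - (v \<bullet> u) *\<^sub>R v))"
      by (simp only: P3_perp) (simp only: P3_inner_w P3_inner_v)
    also have "\<dots> = P3 w v (x*x') (y*y') (z*z') *v u" by (simp add: P3_mv algebra_simps)
    finally show ?thesis .
  qed
  then show ?thesis by (simp add: matrix_eq)
qed

lemma P3_transpose: "transpose (P3 w v x y z) = P3 w v x y z"
  by (simp add: P3_def transpose_def outer_def vec_eq_iff mat_def mult.commute)

lemma P3_add: "P3 w v x y z + P3 w v x' y' z' = P3 w v (x+x') (y+y') (z+z')"
  by (simp add: P3_def algebra_simps)
lemma P3_diff: "P3 w v x y z - P3 w v x' y' z' = P3 w v (x-x') (y-y') (z-z')"
  by (simp add: P3_def algebra_simps)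
lemma P3_scale: "k *\<^sub>R P3 w v x y z = P3 w v (k*x) (k*y) (k*z)"
  by (simp add: P3_def algebra_simps)
lemma P3_one: "P3 w v 1 1 1 = mat 1"
  by (simp add: P3_def)
lemma P3_zero: "P3 w v 0 0 0 = 0"
  by (simp add: P3_def)

lemma bessel: "(w \<bullet> u)^2 + (v \<bullet> u)^2 \<le> u \<bullet> u"
proof -
  have "0 \<le> (u - (w \<bullet> u) *\<^sub>R w - (v \<bullet> u) *\<^sub>R v) \<bullet> (u - (w \<bullet> u) *\<^sub>R w - (v \<bullet> u) *\<^sub>R v)" by simp
  also have "\<dots> = u \<bullet> u - (w \<bullet> u)^2 - (v \<bullet> u)^2"
    by (simp add: inner_diff_left inner_diff_right ww vv wv vw inner_commute power2_eq_square algebra_simps)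
  finally show ?thesis by simp
qed

lemma P3_quad: "u \<bullet> (P3 w v x y z *v u) = x * (w \<bullet> u)^2 + y * (v \<bullet> u)^2 + z * (u \<bullet> u - (w \<bullet> u)^2 - (v \<bullet> u)^2)"
  by (simp add: P3_mv inner_add_right inner_diff_right inner_commute power2_eq_square algebra_simps)

lemma P3_psd: assumes "x \<ge> 0" "y \<ge> 0" "z \<ge> 0" shows "psd (P3 w v x y z)"
  unfolding psd_def
proof (intro conjI allI)
  show "transpose (P3 w v x y z) = P3 w v x y z" by (rule P3_transpose)
  fix u
  have "0 \<le> u \<bullet> u - (w \<bullet> u)^2 - (v \<bullet> u)^2" using bessel[of u] by simp
  then show "0 \<le> u \<bullet> (P3 w v x y z *v u)" unfolding P3_quad using assms by simp
qed

lemma trace_outer: "trace (outer u u) = u \<bullet> u"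
  by (simp add: trace_def outer_def inner_vec_def)

lemma trace_scale: "trace (k *\<^sub>R (A::real^'k^'k)) = k * trace A"
  by (simp add: trace_def sum_distrib_left)

lemma P3_trace: "trace (P3 w v x y z) = x + y + (real CARD('n) - 2) * z"
  by (simp add: P3_def trace_add trace_sub trace_scale trace_outer trace_I ww vv algebra_simps)

lemma P3_w: "P3 w v x y z *v w = x *\<^sub>R w" by (simp add: P3_mv ww vw)
lemma P3_v: "P3 w v x y z *v v = y *\<^sub>R v" by (simp add: P3_mv vv wv)
lemma P3_u: assumes "u \<bullet> w = 0" "u \<bullet> v = 0" shows "P3 w v x y z *v u = z *\<^sub>R u"
  using assms by (simp add: P3_mv inner_commute)

end

lemma XXt_zero: fixes X :: "real^'m^'n" assumes "X ** transpose X = 0" shows "X = 0"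
proof -
  have "\<And>i. (\<Sum>k\<in>UNIV. (X$i$k)^2) = 0"
  proof -
    fix i
    have "(X ** transpose X) $ i $ i = (\<Sum>k\<in>UNIV. (X$i$k)^2)"
      by (simp add: matrix_matrix_mult_def transpose_def power2_eq_square)
    then show "(\<Sum>k\<in>UNIV. (X$i$k)^2) = 0" using assms by simp
  qed
  then have "\<And>i k. X$i$k = 0" by (simp add: sum_nonneg_eq_0_iff)
  then show ?thesis by (simp add: vec_eq_iff)
qed

lemma zero_lemma: fixes E :: "real^'n^'n" and W :: "real^'m^'n"
  assumes "transpose E = E" "E ** (W ** transpose W) ** E = 0" shows "E ** W = 0"
proof -
  have "(E ** W) ** transpose (E ** W) = E ** (W ** transpose W) ** E"
    using assms(1) by (simp add: matrix_transpose_mul matrix_mul_assoc)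
  then show ?thesis using assms(2) XXt_zero by metis
qed

lemma coef1: assumes "m \<ge> 0" shows "(\<bar>g\<bar>/sqrt m) * m * (1/(\<bar>g\<bar>*m* sqrt m)) * m * (\<bar>g\<bar>/sqrt m) = \<bar>g\<bar>/sqrt m"
proof (cases "g = 0 \<or> m = 0")
  case False
  then have "sqrt m > 0" "m > 0" using assms by auto
  then show ?thesis using False by (simp add: field_simps)
qed auto

lemma coef2: assumes "m \<ge> 0" shows "(1/(\<bar>g\<bar>*m* sqrt m)) * m * (\<bar>g\<bar>/sqrt m) * m * (1/(\<bar>g\<bar>*m* sqrt m)) = 1/(\<bar>g\<bar>*m* sqrt m)"
proof (cases "g = 0 \<or> m = 0")
  case False
  then have "sqrt m > 0" "m > 0" using assms by auto
  then show ?thesis using False by (simp add: field_simps)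
qed auto

lemma coef3: assumes "m \<ge> 0" shows "((\<bar>g\<bar>/sqrt m) * m * (\<bar>g\<bar>/sqrt m) - g * g) * m * ((\<bar>g\<bar>/sqrt m) * m * (\<bar>g\<bar>/sqrt m) - g * g) = 0"
proof (cases "m = 0")
  case False
  then have "sqrt m > 0" "m > 0" using assms by auto
  then have "(\<bar>g\<bar>/sqrt m) * m * (\<bar>g\<bar>/sqrt m) = g * g"
    by (simp add: field_simps)
  then show ?thesis by simp
qed auto

lemma coef4: assumes "m \<ge> 0" shows "g * m * (1/(\<bar>g\<bar>*m* sqrt m)) = sgn g / sqrt m"
proof (cases "g = 0 \<or> m = 0")
  case False
  then have "sqrt m > 0" "m > 0" using assms by auto
  then show ?thesis using False by (simp add: field_simps sgn_if)
qed auto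

lemma transpose_inner: fixes W :: "real^'m^'n" shows "x \<bullet> (transpose W *v y) = (W *v x) \<bullet> y"
  by (metis dot_lmul_matrix vector_transpose_matrix)

context ON begin

lemma WDW_mult: fixes W :: "real^'m^'n"
  shows "(transpose W ** D1 ** W) ** (transpose W ** D2 ** W) = transpose W ** (D1 ** (W ** transpose W) ** D2) ** W"
  by (simp add: matrix_mul_assoc)

lemma polar_P3:
  fixes W :: "real^'m^'n"
  assumes M: "W ** transpose W = P3 w v a b c" and nn: "a \<ge> 0" "b \<ge> 0" "c \<ge> 0"
  shows "polar (P3 w v g1 g2 g3 ** W) = P3 w v (sgn g1 / sqrt a) (sgn g2 / sqrt b) (sgn g3 / sqrt c) ** W"
proof -
  define r1 where "r1 = \<bar>g1\<bar>/sqrt a"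
  define r2 where "r2 = \<bar>g2\<bar>/sqrt b"
  define r3 where "r3 = \<bar>g3\<bar>/sqrt c"
  define h1 where "h1 = 1/(\<bar>g1\<bar>*a* sqrt a)"
  define h2 where "h2 = 1/(\<bar>g2\<bar>*b* sqrt b)"
  define h3 where "h3 = 1/(\<bar>g3\<bar>*c* sqrt c)"
  define A where "A = P3 w v g1 g2 g3 ** W"
  define R where "R = transpose W ** P3 w v r1 r2 r3 ** W"
  define X where "X = transpose W ** P3 w v h1 h2 h3 ** W"
  have tW: "transpose (transpose W ** D ** W) = transpose W ** D ** W" if "transpose D = D" for D :: "real^'n^'n"
    using that by (simp add: matrix_transpose_mul matrix_mul_assoc)
  have AtA: "transpose A ** A = transpose W ** P3 w v (g1*g1) (g2*g2) (g3*g3) ** W"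
  proof -
    have "transpose A ** A = transpose W ** (P3 w v g1 g2 g3 ** P3 w v g1 g2 g3) ** W"
      unfolding A_def by (simp add: matrix_transpose_mul P3_transpose matrix_mul_assoc)
    then show ?thesis by (simp add: P3_mult)
  qed
  have RR0: "R ** R = transpose W ** P3 w v (r1*a*r1) (r2*b*r2) (r3*c*r3) ** W"
    unfolding R_def WDW_mult M P3_mult ..
  have E: "P3 w v (r1*a*r1 - g1*g1) (r2*b*r2 - g2*g2) (r3*c*r3 - g3*g3) ** W = 0"
  proof (rule zero_lemma)
    show "transpose (P3 w v (r1*a*r1 - g1*g1) (r2*b*r2 - g2*g2) (r3*c*r3 - g3*g3)) = P3 w v (r1*a*r1 - g1*g1) (r2*b*r2 - g2*g2) (r3*c*r3 - g3*g3)"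
      by (rule P3_transpose)
    show "P3 w v (r1*a*r1 - g1*g1) (r2*b*r2 - g2*g2) (r3*c*r3 - g3*g3) ** (W ** transpose W) ** P3 w v (r1*a*r1 - g1*g1) (r2*b*r2 - g2*g2) (r3*c*r3 - g3*g3) = 0"
      unfolding M P3_mult r1_def r2_def r3_def using coef3 nn by (simp add: P3_zero)
  qed
  have RR: "R ** R = transpose A ** A"
  proof -
    have "R ** R - transpose A ** A = transpose W ** (P3 w v (r1*a*r1 - g1*g1) (r2*b*r2 - g2*g2) (r3*c*r3 - g3*g3) ** W)"
      unfolding RR0 AtA by (simp add: P3_diff[symmetric] matrix_diff_ldistrib matrix_diff_rdistrib matrix_mul_assoc)
    then show ?thesis using E by simp
  qed
  have r0: "r1 \<ge> 0" "r2 \<ge> 0" "r3 \<ge> 0" unfolding r1_def r2_def r3_def using nn by auto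
  have psdR: "psd R"
    unfolding psd_def
  proof (intro conjI allI)
    show "transpose R = R" unfolding R_def by (rule tW) (rule P3_transpose)
    fix x
    have "x \<bullet> (R *v x) = (W *v x) \<bullet> (P3 w v r1 r2 r3 *v (W *v x))"
    proof -
      have "R *v x = transpose W *v (P3 w v r1 r2 r3 *v (W *v x))" unfolding R_def by (simp only: matrix_vector_mul_assoc matrix_mul_assoc)
      then show ?thesis by (simp only: transpose_inner)
    qed
    also have "\<dots> \<ge> 0" using P3_psd[OF r0] psd_def by blast
    finally show "0 \<le> x \<bullet> (R *v x)" .
  qed
  have sq: "psd_sqrt (transpose A ** A) = R" using psd_sqrt_eq[OF psdR RR] .
  have RX: "R ** X = transpose W ** P3 w v (r1*a*h1) (r2*b*h2) (r3*c*h3) ** W"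
    unfolding R_def X_def WDW_mult M P3_mult ..
  have XR: "X ** R = transpose W ** P3 w v (r1*a*h1) (r2*b*h2) (r3*c*h3) ** W"
    unfolding R_def X_def WDW_mult M P3_mult by (simp add: mult_ac)
  have RXR: "R ** X ** R = R"
    unfolding RX unfolding R_def WDW_mult M P3_mult
    unfolding r1_def r2_def r3_def h1_def h2_def h3_def using coef1 nn by simp
  have XRX: "X ** R ** X = X"
    unfolding XR unfolding X_def WDW_mult M P3_mult
    unfolding r1_def r2_def r3_def h1_def h2_def h3_def using coef2 nn by (simp add: mult_ac)
  have pX: "pinv R = X"
  proof (rule pinv_eq[OF RXR XRX])
    show "transpose (R ** X) = R ** X" unfolding RX by (rule tW) (rule P3_transpose)
    show "transpose (X ** R) = X ** R" unfolding XR by (rule tW) (rule P3_transpose)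
  qed
  have "polar A = A ** X" unfolding polar_def sq pX ..
  also have "\<dots> = P3 w v (g1*a*h1) (g2*b*h2) (g3*c*h3) ** W"
    unfolding A_def X_def by (simp add: matrix_mul_assoc flip: M) (simp add: matrix_mul_assoc[symmetric] M P3_mult mult_ac)
  also have "\<dots> = P3 w v (sgn g1 / sqrt a) (sgn g2 / sqrt b) (sgn g3 / sqrt c) ** W"
    unfolding h1_def h2_def h3_def using coef4 nn by simp
  finally show ?thesis unfolding A_def .
qed

end

lemma Basis_real_vec: "(Basis :: (real^'n) set) = range (\<lambda>i. axis i 1)"
  by (auto simp: Basis_vec_def)

lemma vec_prod_hbi:
  fixes f :: "'n::finite \<Rightarrow> real \<Rightarrow> real"
  assumes int: "\<And>i. integrable lborel (f i)"
  shows "has_bochner_integral lborel (\<lambda>z::real^'n. \<Prod>i\<in>UNIV. f i (z$i)) (\<Prod>i\<in>UNIV. integral\<^sup>L lborel (f i))"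
proof -
  define F where "F b = f (SOME i. axis i 1 = b)" for b :: "real^'n"
  have F_ax: "F (axis i 1) = f i" for i
  proof -
    have "(SOME j. axis j (1::real) = axis i 1) = i"
      by (rule some_equality) (auto simp: axis_eq_axis)
    then show ?thesis by (simp add: F_def)
  qed
  have meas[measurable]: "f i \<in> borel_measurable lborel" for i using int by auto
  have Fmeas[measurable]: "F b \<in> borel_measurable borel" for b unfolding F_def using meas by simp
  interpret P: product_sigma_finite "\<lambda>_::real^'n. (lborel::real measure)"
    by (simp add: product_sigma_finite_def sigma_finite_lborel)
  define T where "T = (\<lambda>g::real^'n \<Rightarrow> real. \<Sum>b\<in>Basis. g b *\<^sub>R b)"
  have Tmeas: "T \<in> measurable (\<Pi>\<^sub>M b\<in>Basis. lborel) borel" unfolding T_def by measurable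
  have Tcomp: "(T g) $ i = g (axis i 1)" for g i
  proof -
    have "(T g) $ i = (T g) \<bullet> axis i 1" by (simp add: cart_eq_inner_axis)
    also have "\<dots> = g (axis i 1)" unfolding T_def
      by (rule inner_sum_left_Basis) (simp add: Basis_real_vec)
    finally show ?thesis .
  qed
  have h: "(\<Prod>i\<in>UNIV. f i ((T g) $ i)) = (\<Prod>b\<in>Basis. F b (g b))" for g
  proof -
    have "(\<Prod>b\<in>Basis. F b (g b)) = (\<Prod>i\<in>UNIV. F (axis i 1) (g (axis i 1)))"
      unfolding Basis_real_vec by (subst prod.reindex) (auto simp: inj_def axis_eq_axis)
    then show ?thesis by (simp add: F_ax Tcomp)
  qed
  have hm: "(\<lambda>z::real^'n. \<Prod>i\<in>UNIV. f i (z$i)) \<in> borel_measurable borel" by measurable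
  have intF: "\<And>b. b \<in> Basis \<Longrightarrow> integrable lborel (F b)" unfolding F_def using int by simp
  have "integrable (\<Pi>\<^sub>M b\<in>Basis. lborel) (\<lambda>g. \<Prod>b\<in>Basis. F b (g b))"
    by (rule P.product_integrable_prod) (auto intro: intF)
  then have "integrable (\<Pi>\<^sub>M b\<in>Basis. lborel) (\<lambda>g. \<Prod>i\<in>UNIV. f i ((T g) $ i))"
    by (simp add: h)
  then have I: "integrable lborel (\<lambda>z::real^'n. \<Prod>i\<in>UNIV. f i (z$i))"
    unfolding lborel_eq[where 'a="real^'n"] T_def[symmetric]
    using integrable_distr_eq[OF Tmeas hm] by simp
  have "integral\<^sup>L lborel (\<lambda>z::real^'n. \<Prod>i\<in>UNIV. f i (z$i))
      = integral\<^sup>L (\<Pi>\<^sub>M b\<in>Basis. lborel) (\<lambda>g. \<Prod>i\<in>UNIV. f i ((T g) $ i))"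
    unfolding lborel_eq[where 'a="real^'n"] T_def[symmetric]
    using integral_distr[OF Tmeas hm] by simp
  also have "\<dots> = integral\<^sup>L (\<Pi>\<^sub>M b\<in>Basis. lborel) (\<lambda>g. \<Prod>b\<in>Basis. F b (g b))"
    by (simp add: h)
  also have "\<dots> = (\<Prod>b\<in>Basis. integral\<^sup>L lborel (F b))"
    by (rule P.product_integral_prod) (auto intro: intF)
  also have "\<dots> = (\<Prod>i\<in>UNIV. integral\<^sup>L lborel (f i))"
    unfolding Basis_real_vec by (subst prod.reindex) (auto simp: inj_def axis_eq_axis F_ax)
  finally show ?thesis using I by (simp add: has_bochner_integral_iff)
qed

definition mom :: "nat \<Rightarrow> real" where
  "mom k = integral\<^sup>L lborel (\<lambda>x. std_normal_density x * x ^ k)"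

lemma mom_vals: "mom 0 = 1" "mom (Suc 0) = 0" "mom 2 = 1" "mom 3 = 0" "mom 4 = 3"
proof -
  show "mom 0 = 1" using integral_std_normal_moment_even[of 0] by (simp add: mom_def)
  show "mom (Suc 0) = 0" using integral_std_normal_moment_odd[of 0] by (simp add: mom_def)
  show "mom 2 = 1" using integral_std_normal_moment_even[of 1] by (simp add: mom_def)
  show "mom 3 = 0" using integral_std_normal_moment_odd[of 1] by (simp add: mom_def numeral_3_eq_3)
  have "mom 4 = fact 4 / (2^2 * fact 2)" using integral_std_normal_moment_even[of 2] by (simp add: mom_def)
  then show "mom 4 = 3" by (simp add: fact_numeral)
qed

lemma mono_hbi: "has_bochner_integral lborel
   (\<lambda>z::real^'n. \<Prod>m\<in>UNIV. std_normal_density (z$m) * (z$m) ^ c m) (\<Prod>m\<in>UNIV. mom (c m))"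
  unfolding mom_def by (rule vec_prod_hbi[where f="\<lambda>m x. std_normal_density x * x ^ c m"]) (rule integrable_std_normal_moment)

lemma mom_suc: "mom (Suc (Suc 0)) = 1" "mom (Suc (Suc (Suc 0))) = 0" "mom (Suc (Suc (Suc (Suc 0)))) = 3"
proof -
  show "mom (Suc (Suc 0)) = 1" using mom_vals(3) by (simp add: numeral_2_eq_2)
  show "mom (Suc (Suc (Suc 0))) = 0" using mom_vals(4) by (simp add: numeral_3_eq_3)
  have "(4::nat) = Suc (Suc (Suc (Suc 0)))" by simp
  then show "mom (Suc (Suc (Suc (Suc 0)))) = 3" using mom_vals(5) by metis
qed

lemma sum4_prod: "(\<Sum>i\<in>A. \<Sum>j\<in>B. f i j) * (\<Sum>k\<in>C. \<Sum>l\<in>D. g k l) = (\<Sum>i\<in>A. \<Sum>j\<in>B. \<Sum>k\<in>C. \<Sum>l\<in>D. f i j * (g k l::real))"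
  by (simp only: sum_distrib_right) (simp only: sum_distrib_left)

definition cnt4 :: "'n \<Rightarrow> 'n \<Rightarrow> 'n \<Rightarrow> 'n \<Rightarrow> 'n \<Rightarrow> nat" where
  "cnt4 i j k l m = (if i = m then 1 else 0) + (if j = m then 1 else 0) + (if k = m then 1 else 0) + (if l = m then 1 else 0)"

lemma E4: "(\<Prod>m\<in>(UNIV::'n::finite set). mom (cnt4 i j k l m)) =
   (if i = j then 1 else 0) * (if k = l then 1 else 0) + (if i = k then 1 else 0) * (if j = l then 1 else 0) + (if i = l then 1 else 0) * (if j = k then 1 else 0)"
proof -
  have "(\<Prod>m\<in>(UNIV::'n set). mom (cnt4 i j k l m)) = (\<Prod>m\<in>{i,j,k,l}. mom (cnt4 i j k l m))"
    by (rule prod.mono_neutral_right) (auto simp: cnt4_def mom_vals)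
  also have "\<dots> = (if i = j then 1 else 0) * (if k = l then 1 else 0) + (if i = k then 1 else 0) * (if j = l then 1 else 0) + (if i = l then 1 else 0) * (if j = k then 1 else 0)"
    by (cases "i=j"; cases "i=k"; cases "i=l"; cases "j=k"; cases "j=l"; cases "k=l")
       (simp_all add: cnt4_def mom_vals mom_suc insert_commute)
  finally show ?thesis .
qed

lemma mono4: "(\<Prod>m\<in>UNIV. std_normal_density ((z::real^'n)$m) * (z$m) ^ cnt4 i j k l m)
   = (\<Prod>m\<in>UNIV. std_normal_density (z$m)) * (z$i * z$j * z$k * z$l)"
proof -
  have p1: "(\<Prod>m\<in>UNIV. (z$m) ^ (if p = m then 1 else 0)) = z$p" for p
  proof -
    have "(\<lambda>m. (z$m) ^ (if p = m then 1 else 0)) = (\<lambda>m. if p = m then z$m else 1)" by (auto simp: fun_eq_iff)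
    then show ?thesis by (simp only:) (simp add: prod.delta')
  qed
  have "(\<Prod>m\<in>UNIV. (z$m) ^ cnt4 i j k l m) = z$i * z$j * z$k * z$l"
    unfolding cnt4_def power_add prod.distrib p1 ..
  then show ?thesis by (simp add: prod.distrib)
qed

lemma T1: fixes K :: "'n::finite \<Rightarrow> 'n \<Rightarrow> real"
  shows "(\<Sum>i\<in>UNIV. \<Sum>j\<in>UNIV. \<Sum>k\<in>UNIV. \<Sum>l\<in>UNIV. K i j * K k l * ((if i = j then 1 else 0) * (if k = l then 1 else 0))) = (\<Sum>i\<in>UNIV. K i i) * (\<Sum>k\<in>UNIV. K k k)"
proof -
  have a: "(\<Sum>l\<in>UNIV. K i j * K k l * ((if i = j then 1 else 0) * (if k = l then 1 else 0))) = (if i = j then K i i * K k k else 0)" for i j k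
  proof -
    have eq: "(\<lambda>l. K i j * K k l * ((if i = j then 1 else 0) * (if k = l then 1 else 0))) = (\<lambda>l. if k = l then (if i = j then K i i * K k k else 0) else 0)"
      by (auto simp: fun_eq_iff)
    show ?thesis by (subst eq) simp
  qed
  have b: "(\<Sum>j\<in>UNIV. \<Sum>k\<in>UNIV. (if i = j then K i i * K k k else 0)) = K i i * (\<Sum>k\<in>UNIV. K k k)" for i
  proof -
    have eq: "(\<lambda>j. \<Sum>k\<in>UNIV. (if i = j then K i i * K k k else 0)) = (\<lambda>j. if i = j then (\<Sum>k\<in>UNIV. K i i * K k k) else 0)"
      by (auto simp: fun_eq_iff)
    show ?thesis by (subst eq) (simp add: sum_distrib_left)
  qed
  show ?thesis by (simp only: a b sum_distrib_right)
qed
lemma T2: fixes K :: "'n::finite \<Rightarrow> 'n \<Rightarrow> real"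
  shows "(\<Sum>i\<in>UNIV. \<Sum>j\<in>UNIV. \<Sum>k\<in>UNIV. \<Sum>l\<in>UNIV. K i j * K k l * ((if i = k then 1 else 0) * (if j = l then 1 else 0))) = (\<Sum>i\<in>UNIV. \<Sum>j\<in>UNIV. K i j * K i j)"
proof -
  have a: "(\<Sum>l\<in>UNIV. K i j * K k l * ((if i = k then 1 else 0) * (if j = l then 1 else 0))) = (if i = k then K i j * K k j else 0)" for i j k
  proof -
    have eq: "(\<lambda>l. K i j * K k l * ((if i = k then 1 else 0) * (if j = l then 1 else 0))) = (\<lambda>l. if j = l then (if i = k then K i j * K k j else 0) else 0)"
      by (auto simp: fun_eq_iff)
    show ?thesis by (subst eq) simp
  qed
  have b: "(\<Sum>k\<in>UNIV. (if i = k then K i j * K k j else 0)) = K i j * K i j" for i j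
    by simp
  show ?thesis by (simp only: a b)
qed
lemma T3: fixes K :: "'n::finite \<Rightarrow> 'n \<Rightarrow> real"
  shows "(\<Sum>i\<in>UNIV. \<Sum>j\<in>UNIV. \<Sum>k\<in>UNIV. \<Sum>l\<in>UNIV. K i j * K k l * ((if i = l then 1 else 0) * (if j = k then 1 else 0))) = (\<Sum>i\<in>UNIV. \<Sum>j\<in>UNIV. K i j * K j i)"
proof -
  have a: "(\<Sum>l\<in>UNIV. K i j * K k l * ((if i = l then 1 else 0) * (if j = k then 1 else 0))) = (if j = k then K i j * K k i else 0)" for i j k
  proof -
    have eq: "(\<lambda>l. K i j * K k l * ((if i = l then 1 else 0) * (if j = k then 1 else 0))) = (\<lambda>l. if i = l then (if j = k then K i j * K k i else 0) else 0)"
      by (auto simp: fun_eq_iff)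
    show ?thesis by (subst eq) simp
  qed
  have b: "(\<Sum>k\<in>UNIV. (if j = k then K i j * K k i else 0)) = K i j * K j i" for i j
    by simp
  show ?thesis by (simp only: a b)
qed

lemma gauss_quartic:
  fixes K :: "real^'n^'n"
  shows "has_bochner_integral lborel
    (\<lambda>z::real^'n. (\<Prod>m\<in>UNIV. std_normal_density (z$m)) * ((z \<bullet> (K *v z))^2 + s))
    ((\<Sum>i\<in>UNIV. K$i$i)^2 + (\<Sum>i\<in>UNIV. \<Sum>j\<in>UNIV. K$i$j * K$i$j) + (\<Sum>i\<in>UNIV. \<Sum>j\<in>UNIV. K$i$j * K$j$i) + s)"
proof -
  let ?mono = "\<lambda>i j k l (z::real^'n). \<Prod>m\<in>UNIV. std_normal_density (z$m) * (z$m) ^ cnt4 i j k l m"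
  let ?E = "\<lambda>i j k l. (if i = j then 1 else 0) * (if k = l then 1 else 0) + (if i = k then 1 else 0) * (if j = l then 1 else 0) + (if i = l then 1 else 0) * (if j = k then (1::real) else 0)"
  have h4: "has_bochner_integral lborel (?mono i j k l) (?E i j k l)" for i j k l
    using mono_hbi[of "cnt4 i j k l"] by (simp add: E4)
  have h0: "has_bochner_integral lborel (\<lambda>z::real^'n. \<Prod>m\<in>UNIV. std_normal_density (z$m) * (z$m) ^ 0) 1"
    using mono_hbi[of "\<lambda>_. 0"] by (simp add: mom_vals)
  have H: "has_bochner_integral lborel
     (\<lambda>z. (\<Sum>i\<in>UNIV. \<Sum>j\<in>UNIV. \<Sum>k\<in>UNIV. \<Sum>l\<in>UNIV. (K$i$j * K$k$l) * ?mono i j k l z)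
        + s * (\<Prod>m\<in>UNIV. std_normal_density (z$m) * (z$m) ^ 0))
     ((\<Sum>i\<in>UNIV. \<Sum>j\<in>UNIV. \<Sum>k\<in>UNIV. \<Sum>l\<in>UNIV. (K$i$j * K$k$l) * ?E i j k l) + s * 1)"
    by (intro has_bochner_integral_add has_bochner_integral_sum has_bochner_integral_mult_right h4 h0)
  have f_eq: "(\<Sum>i\<in>UNIV. \<Sum>j\<in>UNIV. \<Sum>k\<in>UNIV. \<Sum>l\<in>UNIV. (K$i$j * K$k$l) * ?mono i j k l z)
        + s * (\<Prod>m\<in>UNIV. std_normal_density (z$m) * (z$m) ^ 0)
     = (\<Prod>m\<in>UNIV. std_normal_density (z$m)) * ((z \<bullet> (K *v z))^2 + s)" for z :: "real^'n"
  proof -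
    have q: "z \<bullet> (K *v z) = (\<Sum>i\<in>UNIV. \<Sum>j\<in>UNIV. K$i$j * (z$i * z$j))"
      by (simp add: inner_vec_def matrix_vector_mult_def sum_distrib_left mult_ac)
    have "(z \<bullet> (K *v z))^2 = (\<Sum>i\<in>UNIV. \<Sum>j\<in>UNIV. \<Sum>k\<in>UNIV. \<Sum>l\<in>UNIV. (K$i$j * K$k$l) * (z$i * z$j * z$k * z$l))"
      unfolding q power2_eq_square sum4_prod by (simp add: mult_ac)
    moreover have "(\<Sum>i\<in>UNIV. \<Sum>j\<in>UNIV. \<Sum>k\<in>UNIV. \<Sum>l\<in>UNIV. (K$i$j * K$k$l) * ((\<Prod>m\<in>UNIV. std_normal_density (z$m)) * (z$i * z$j * z$k * z$l)))
      = (\<Prod>m\<in>UNIV. std_normal_density (z$m)) * (\<Sum>i\<in>UNIV. \<Sum>j\<in>UNIV. \<Sum>k\<in>UNIV. \<Sum>l\<in>UNIV. (K$i$j * K$k$l) * (z$i * z$j * z$k * z$l))"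
      by (simp add: sum_distrib_left mult_ac)
    ultimately show ?thesis unfolding mono4 by (simp add: distrib_left)
  qed
  have v_eq: "(\<Sum>i\<in>UNIV. \<Sum>j\<in>UNIV. \<Sum>k\<in>UNIV. \<Sum>l\<in>UNIV. (K$i$j * K$k$l) * ?E i j k l) + s * 1
     = (\<Sum>i\<in>UNIV. K$i$i)^2 + (\<Sum>i\<in>UNIV. \<Sum>j\<in>UNIV. K$i$j * K$i$j) + (\<Sum>i\<in>UNIV. \<Sum>j\<in>UNIV. K$i$j * K$j$i) + s"
  proof -
    have "(\<Sum>i\<in>UNIV. \<Sum>j\<in>UNIV. \<Sum>k\<in>UNIV. \<Sum>l\<in>UNIV. (K$i$j * K$k$l) * ?E i j k l) =
      (\<Sum>i\<in>UNIV. \<Sum>j\<in>UNIV. \<Sum>k\<in>UNIV. \<Sum>l\<in>UNIV. K$i$j * K$k$l * ((if i = j then 1 else 0) * (if k = l then 1 else 0)))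
      + (\<Sum>i\<in>UNIV. \<Sum>j\<in>UNIV. \<Sum>k\<in>UNIV. \<Sum>l\<in>UNIV. K$i$j * K$k$l * ((if i = k then 1 else 0) * (if j = l then 1 else 0)))
      + (\<Sum>i\<in>UNIV. \<Sum>j\<in>UNIV. \<Sum>k\<in>UNIV. \<Sum>l\<in>UNIV. K$i$j * K$k$l * ((if i = l then 1 else 0) * (if j = k then 1 else 0)))"
      by (simp only: distrib_left sum.distrib)
    also have "\<dots> = (\<Sum>i\<in>UNIV. K$i$i) * (\<Sum>k\<in>UNIV. K$k$k) + (\<Sum>i\<in>UNIV. \<Sum>j\<in>UNIV. K$i$j * K$i$j) + (\<Sum>i\<in>UNIV. \<Sum>j\<in>UNIV. K$i$j * K$j$i)"
      using T1[of "\<lambda>i j. K$i$j"] T2[of "\<lambda>i j. K$i$j"] T3[of "\<lambda>i j. K$i$j"] by simp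
    finally show ?thesis by (simp add: power2_eq_square)
  qed
  show ?thesis using H unfolding f_eq v_eq .
qed

lemma gauss_1d: "has_bochner_integral lborel (\<lambda>s. std_normal_density s * (A + \<sigma> * s)^2) (A^2 + \<sigma>^2)"
proof -
  have h0: "has_bochner_integral lborel (\<lambda>x. std_normal_density x * x ^ (2*0)) 1"
    using std_normal_moment_even[of 0] by simp
  have h1: "has_bochner_integral lborel (\<lambda>x. std_normal_density x * x ^ (2*0+1)) 0"
    using std_normal_moment_odd[of 0] by simp
  have h2: "has_bochner_integral lborel (\<lambda>x. std_normal_density x * x ^ (2*1)) 1"
    using std_normal_moment_even[of 1] by simp
  have "has_bochner_integral lborel (\<lambda>x. A^2 * (std_normal_density x * x ^ (2*0)) + (2*A*\<sigma>) * (std_normal_density x * x ^ (2*0+1))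
     + \<sigma>^2 * (std_normal_density x * x ^ (2*1))) (A^2 * 1 + (2*A*\<sigma>) * 0 + \<sigma>^2 * 1)"
    by (intro has_bochner_integral_add has_bochner_integral_mult_right h0 h1 h2)
  then show ?thesis
    by (rule has_bochner_integral_cong[THEN iffD1, rotated -1]) (auto simp: power2_eq_square algebra_simps)
qed

lemma frob_mult_right: fixes X :: "real^'k^'n" and Y :: "real^'m^'n" and Z :: "real^'k^'m"
  shows "X \<bullet> (Y ** Z) = (transpose Y ** X) \<bullet> Z"
proof -
  have "X \<bullet> (Y ** Z) = (\<Sum>i\<in>UNIV. \<Sum>l\<in>UNIV. \<Sum>j\<in>UNIV. X$i$l * Y$i$j * Z$j$l)"
    by (simp add: inner_vec_def matrix_matrix_mult_def sum_distrib_left mult_ac)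
  also have "\<dots> = (\<Sum>i\<in>UNIV. \<Sum>j\<in>UNIV. \<Sum>l\<in>UNIV. X$i$l * Y$i$j * Z$j$l)"
    by (rule sum.cong[OF refl], rule sum.swap)
  also have "\<dots> = (\<Sum>j\<in>UNIV. \<Sum>i\<in>UNIV. \<Sum>l\<in>UNIV. X$i$l * Y$i$j * Z$j$l)"
    by (rule sum.swap)
  also have "\<dots> = (\<Sum>j\<in>UNIV. \<Sum>l\<in>UNIV. \<Sum>i\<in>UNIV. X$i$l * Y$i$j * Z$j$l)"
    by (rule sum.cong[OF refl], rule sum.swap)
  also have "\<dots> = (transpose Y ** X) \<bullet> Z"
    by (simp add: inner_vec_def matrix_matrix_mult_def transpose_def sum_distrib_right sum_distrib_left mult_ac)
  finally show ?thesis .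
qed

lemma frob_transpose: fixes X Y :: "real^'m^'n"
  shows "transpose X \<bullet> transpose Y = X \<bullet> Y"
  by (simp add: inner_vec_def transpose_def) (rule sum.swap)

lemma frob_mult_left: fixes X :: "real^'k^'n" and Y :: "real^'m^'n" and Z :: "real^'k^'m"
  shows "X \<bullet> (Y ** Z) = (X ** transpose Z) \<bullet> Y"
proof -
  have "X \<bullet> (Y ** Z) = transpose X \<bullet> (transpose Z ** transpose Y)"
    by (simp add: frob_transpose flip: matrix_transpose_mul)
  also have "\<dots> = (Z ** transpose X) \<bullet> transpose Y" by (simp add: frob_mult_right)
  also have "\<dots> = (X ** transpose Z) \<bullet> Y" by (metis frob_transpose matrix_transpose_mul transpose_transpose)
  finally show ?thesis .
qed

lemma trace_frob: "trace (X::real^'n^'n) = mat 1 \<bullet> X"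
  by (simp add: trace_def inner_vec_def mat_def if_distrib if_distribR cong: if_cong)

lemma transpose_diff: "transpose (X - Y) = transpose X - transpose (Y::real^'m^'n)"
  by (simp add: transpose_def vec_eq_iff)

lemma trace_neg: "trace (- (A::real^'n^'n)) = - trace A"
  by (simp add: trace_def sum_negf)

lemma bilinear_mmult: "bilinear (\<lambda>(A::real^'m^'n) (B::real^'k^'m). A ** B)"
  unfolding bilinear_def linear_iff
  by (auto simp: matrix_add_ldistrib matrix_add_rdistrib scalar_matrix_assoc matrix_scalar_ac)

lemma bb_mmult: "bounded_bilinear (\<lambda>(A::real^'m^'n) (B::real^'k^'m). A ** B)"
  using bilinear_mmult bilinear_conv_bounded_bilinear by blast

lemma bl_lmult: "bounded_linear (\<lambda>(B::real^'k^'m). (A::real^'m^'n) ** B)"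
  using bounded_bilinear.bounded_linear_right[OF bb_mmult] .

lemma bl_transpose: "bounded_linear (\<lambda>(B::real^'k^'m). transpose B)"
  by (rule linear_conv_bounded_linear[THEN iffD1]) (auto simp: linear_iff transpose_def vec_eq_iff)

lemma bl_trace: "bounded_linear (\<lambda>(B::real^'n^'n). trace B)"
  by (rule linear_conv_bounded_linear[THEN iffD1]) (auto simp: linear_iff trace_def sum.distrib sum_distrib_left)

lemma loss_deriv:
  fixes S C :: "real^'n^'n" and W :: "real^'m^'n"
  assumes Csym: "transpose C = C"
  defines "Kf \<equiv> \<lambda>W::real^'m^'n. C - (transpose S ** W) ** transpose (transpose S ** W)"
  shows "((\<lambda>W. (trace (Kf W))^2 + 2 * (Kf W \<bullet> Kf W) + s) has_derivative
     (\<lambda>H. (- (4 * trace (Kf W)) *\<^sub>R (S ** transpose S ** W) - 8 *\<^sub>R (S ** Kf W ** transpose S ** W)) \<bullet> H)) (at W)"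
proof -
  define B where "B = transpose S ** W"
  have dB: "((\<lambda>W. transpose S ** W) has_derivative (\<lambda>H. transpose S ** H)) (at W)"
    using bl_lmult by (rule bounded_linear_imp_has_derivative)
  have dBt: "((\<lambda>W. transpose (transpose S ** W)) has_derivative (\<lambda>H. transpose (transpose S ** H))) (at W)"
    using bounded_linear.has_derivative[OF bl_transpose dB] .
  have dP: "((\<lambda>W. (transpose S ** W) ** transpose (transpose S ** W)) has_derivative
     (\<lambda>H. B ** transpose (transpose S ** H) + (transpose S ** H) ** transpose B)) (at W)"
    using bounded_bilinear.FDERIV[OF bb_mmult dB dBt] unfolding B_def .
  have dK: "(Kf has_derivative (\<lambda>H. - (B ** transpose (transpose S ** H) + (transpose S ** H) ** transpose B))) (at W)"
    unfolding Kf_def using has_derivative_diff[OF has_derivative_const dP] by simp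
  have dT: "((\<lambda>W. trace (Kf W)) has_derivative (\<lambda>H. trace (- (B ** transpose (transpose S ** H) + (transpose S ** H) ** transpose B)))) (at W)"
    using bounded_linear.has_derivative[OF bl_trace dK] .
  define Dk where "Dk = (\<lambda>H. - (B ** transpose (transpose S ** H) + (transpose S ** H) ** transpose B))"
  have d1: "((\<lambda>W. trace (Kf W) * trace (Kf W)) has_derivative (\<lambda>H. trace (Kf W) * trace (Dk H) + trace (Dk H) * trace (Kf W))) (at W)"
    using has_derivative_mult[OF dT dT] unfolding Dk_def .
  have d2: "((\<lambda>W. Kf W \<bullet> Kf W) has_derivative (\<lambda>H. Kf W \<bullet> Dk H + Dk H \<bullet> Kf W)) (at W)"
    using has_derivative_inner[OF dK dK] unfolding Dk_def .
  have dF: "((\<lambda>W. (trace (Kf W))^2 + 2 * (Kf W \<bullet> Kf W) + s) has_derivative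
     (\<lambda>H. (trace (Kf W) * trace (Dk H) + trace (Dk H) * trace (Kf W)) + (2 * (Kf W \<bullet> Dk H + Dk H \<bullet> Kf W) + 0 * (Kf W \<bullet> Kf W)) + 0)) (at W)"
    unfolding power2_eq_square
    by (rule has_derivative_add[OF has_derivative_add[OF d1 has_derivative_mult[OF has_derivative_const d2]] has_derivative_const])
  show ?thesis
  proof (rule has_derivative_subst[OF dF], rule ext)
    fix H :: "real^'m^'n"
    define K where "K = Kf W"
    have Ksym: "transpose K = K" unfolding K_def Kf_def
      by (simp add: transpose_diff Csym matrix_transpose_mul)
    have t1: "trace (B ** transpose (transpose S ** H)) = (S ** transpose S ** W) \<bullet> H"
    proof -
      have "trace (B ** transpose (transpose S ** H)) = (mat 1 ** (transpose S ** H)) \<bullet> B"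
        by (simp add: trace_frob frob_mult_left)
      also have "\<dots> = B \<bullet> (transpose S ** H)" by (simp add: inner_commute)
      also have "\<dots> = (S ** B) \<bullet> H" by (simp add: frob_mult_right)
      finally show ?thesis unfolding B_def by (simp add: matrix_mul_assoc)
    qed
    have t2: "trace ((transpose S ** H) ** transpose B) = (S ** transpose S ** W) \<bullet> H"
    proof -
      have "trace ((transpose S ** H) ** transpose B) = trace (transpose (B ** transpose (transpose S ** H)))"
        by (simp add: matrix_transpose_mul)
      also have "\<dots> = trace (B ** transpose (transpose S ** H))" by (simp add: trace_def transpose_def)
      finally show ?thesis using t1 by simp
    qed
    have k1: "K \<bullet> (B ** transpose (transpose S ** H)) = (S ** K ** transpose S ** W) \<bullet> H"
    proof -
      have "K \<bullet> (B ** transpose (transpose S ** H)) = (K ** (transpose S ** H)) \<bullet> B"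
        by (simp add: frob_mult_left)
      also have "\<dots> = B \<bullet> ((K ** transpose S) ** H)" by (simp add: inner_commute matrix_mul_assoc)
      also have "\<dots> = (transpose (K ** transpose S) ** B) \<bullet> H" by (simp add: frob_mult_right)
      finally show ?thesis unfolding B_def by (simp add: matrix_transpose_mul Ksym matrix_mul_assoc)
    qed
    have k2: "K \<bullet> ((transpose S ** H) ** transpose B) = (S ** K ** transpose S ** W) \<bullet> H"
    proof -
      have "K \<bullet> ((transpose S ** H) ** transpose B) = transpose K \<bullet> transpose ((transpose S ** H) ** transpose B)"
        by (simp add: frob_transpose)
      also have "\<dots> = K \<bullet> (B ** transpose (transpose S ** H))" by (simp add: Ksym matrix_transpose_mul)
      finally show ?thesis using k1 by simp
    qed
    have tr: "trace (Dk H) = - 2 * ((S ** transpose S ** W) \<bullet> H)"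
      unfolding Dk_def using t1 t2 by (simp only: trace_neg trace_add)
    have i1: "K \<bullet> Dk H = - 2 * ((S ** K ** transpose S ** W) \<bullet> H)"
      unfolding Dk_def using k1 k2 by (simp only: inner_minus_right inner_add_right)
    have i2: "Dk H \<bullet> K = - 2 * ((S ** K ** transpose S ** W) \<bullet> H)"
      using i1 by (simp add: inner_commute)
    show "(trace (Kf W) * trace (Dk H) + trace (Dk H) * trace (Kf W)) + (2 * (Kf W \<bullet> Dk H + Dk H \<bullet> Kf W) + 0 * (Kf W \<bullet> Kf W)) + 0
      = (- (4 * trace (Kf W)) *\<^sub>R (S ** transpose S ** W) - 8 *\<^sub>R (S ** Kf W ** transpose S ** W)) \<bullet> H"
      unfolding K_def[symmetric] tr i1 i2 inner_diff_left inner_scaleR_left by (simp add: algebra_simps)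
  qed
qed

lemma inner_T: fixes B :: "real^'m^'n" shows "x \<bullet> (B *v u) = (transpose B *v x) \<bullet> u"
  by (metis transpose_inner transpose_transpose)

lemma A_quad:
  fixes S :: "real^'n^'n" and W :: "real^'m^'n" and z w :: "real^'n"
  shows "((S *v z) \<bullet> w)\<^sup>2 - (\<Sum>j\<in>UNIV. (column j W \<bullet> (S *v z))\<^sup>2)
     = z \<bullet> ((transpose S ** outer w w ** S - (transpose S ** W) ** transpose (transpose S ** W)) *v z)"
proof -
  define y where "y = S *v z"
  have c1: "z \<bullet> ((transpose S ** outer w w ** S) *v z) = (y \<bullet> w)\<^sup>2"
  proof -
    have "(transpose S ** outer w w ** S) *v z = transpose S *v (outer w w *v y)"
      unfolding y_def by (simp only: matrix_vector_mul_assoc matrix_mul_assoc)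
    then have "z \<bullet> ((transpose S ** outer w w ** S) *v z) = y \<bullet> (outer w w *v y)"
      unfolding y_def by (simp only: transpose_inner)
    then show ?thesis by (simp add: outer_mv power2_eq_square inner_commute)
  qed
  have c2: "z \<bullet> (((transpose S ** W) ** transpose (transpose S ** W)) *v z) = (\<Sum>j\<in>UNIV. (column j W \<bullet> y)\<^sup>2)"
  proof -
    define P where "P = transpose S ** W"
    have "((transpose S ** W) ** transpose (transpose S ** W)) *v z = P *v (transpose P *v z)"
      unfolding P_def by (simp only: matrix_vector_mul_assoc)
    then have "z \<bullet> (((transpose S ** W) ** transpose (transpose S ** W)) *v z)
        = (transpose (transpose S ** W) *v z) \<bullet> (transpose (transpose S ** W) *v z)"
      using inner_T[of z P "transpose P *v z"] unfolding P_def by simp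
    also have "transpose (transpose S ** W) *v z = transpose W *v y"
      unfolding y_def by (simp only: matrix_transpose_mul transpose_transpose matrix_vector_mul_assoc[symmetric])
    also have "(transpose W *v y) \<bullet> (transpose W *v y) = (\<Sum>j\<in>UNIV. (column j W \<bullet> y)\<^sup>2)"
      by (simp add: inner_vec_def matrix_vector_mult_def transpose_def column_def power2_eq_square del: transpose_matrix_vector)
    finally show ?thesis .
  qed
  show ?thesis unfolding matrix_vector_mult_diff_rdistrib inner_diff_right c1 c2 y_def ..
qed

lemma pop_loss_closed:
  fixes Q :: "real^'n^'n" and W :: "real^'m^'n" and w :: "real^'n"
  defines "S \<equiv> psd_sqrt Q"
  defines "K \<equiv> transpose S ** outer w w ** S - (transpose S ** W) ** transpose (transpose S ** W)"
  shows "pop_loss \<sigma> Q w W = (trace K)\<^sup>2 + 2 * (K \<bullet> K) + \<sigma>\<^sup>2"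
proof -
  have Ksym: "transpose K = K" unfolding K_def
    by (simp add: transpose_diff matrix_transpose_mul transpose_outer matrix_mul_assoc)
  have inner_int: "(\<integral>s. std_normal_density s *
            (((S *v z) \<bullet> w)\<^sup>2 + \<sigma> * s - (\<Sum>j\<in>UNIV. (column j W \<bullet> (S *v z))\<^sup>2))\<^sup>2 \<partial>lborel)
       = (z \<bullet> (K *v z))\<^sup>2 + \<sigma>\<^sup>2" for z
  proof -
    have "has_bochner_integral lborel (\<lambda>s. std_normal_density s * (z \<bullet> (K *v z) + \<sigma> * s)\<^sup>2) ((z \<bullet> (K *v z))\<^sup>2 + \<sigma>\<^sup>2)"
      by (rule gauss_1d)
    moreover have "(\<lambda>s. std_normal_density s *
            (((S *v z) \<bullet> w)\<^sup>2 + \<sigma> * s - (\<Sum>j\<in>UNIV. (column j W \<bullet> (S *v z))\<^sup>2))\<^sup>2)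
        = (\<lambda>s. std_normal_density s * (z \<bullet> (K *v z) + \<sigma> * s)\<^sup>2)"
    proof (rule ext)
      fix s
      have Aq: "((S *v z) \<bullet> w)\<^sup>2 - (\<Sum>j\<in>UNIV. (column j W \<bullet> (S *v z))\<^sup>2) = z \<bullet> (K *v z)"
        using A_quad[of S z w W] unfolding K_def .
      have e: "((S *v z) \<bullet> w)\<^sup>2 + \<sigma> * s - (\<Sum>j\<in>UNIV. (column j W \<bullet> (S *v z))\<^sup>2)
          = z \<bullet> (K *v z) + \<sigma> * s" using Aq by linarith
      show "std_normal_density s *
            (((S *v z) \<bullet> w)\<^sup>2 + \<sigma> * s - (\<Sum>j\<in>UNIV. (column j W \<bullet> (S *v z))\<^sup>2))\<^sup>2
        = std_normal_density s * (z \<bullet> (K *v z) + \<sigma> * s)\<^sup>2" by (simp only: e)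
    qed
    ultimately show ?thesis by (simp add: has_bochner_integral_integral_eq)
  qed
  have "pop_loss \<sigma> Q w W = (\<integral>z. (\<Prod>i\<in>UNIV. std_normal_density (z $ i)) * ((z \<bullet> (K *v z))\<^sup>2 + \<sigma>\<^sup>2) \<partial>lborel)"
    unfolding pop_loss_def S_def[symmetric] inner_int ..
  also have "\<dots> = (\<Sum>i\<in>UNIV. K$i$i)^2 + (\<Sum>i\<in>UNIV. \<Sum>j\<in>UNIV. K$i$j * K$i$j) + (\<Sum>i\<in>UNIV. \<Sum>j\<in>UNIV. K$i$j * K$j$i) + \<sigma>\<^sup>2"
    using gauss_quartic[of K "\<sigma>\<^sup>2"] by (rule has_bochner_integral_integral_eq)
  also have "\<dots> = (trace K)\<^sup>2 + 2 * (K \<bullet> K) + \<sigma>\<^sup>2"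
  proof -
    have s: "K$j$i = K$i$j" for i j using Ksym by (metis transpose_def vec_lambda_beta)
    have "(\<Sum>i\<in>UNIV. \<Sum>j\<in>UNIV. K$i$j * K$i$j) = K \<bullet> K" by (simp add: inner_vec_def)
    then show ?thesis by (simp add: s trace_def)
  qed
  finally show ?thesis .
qed

lemma grad_eq: fixes f :: "'a::real_inner \<Rightarrow> real"
  assumes "(f has_derivative (\<lambda>h. G \<bullet> h)) (at x)" shows "grad f x = G"
  unfolding grad_def
proof (rule the_equality)
  show "(f has_derivative (\<lambda>h. G \<bullet> h)) (at x)" by (rule assms)
  fix G' assume "(f has_derivative (\<lambda>h. G' \<bullet> h)) (at x)"
  then have "(\<lambda>h. G' \<bullet> h) = (\<lambda>h. G \<bullet> h)" using has_derivative_unique assms by blast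
  then have "G' \<bullet> (G' - G) = G \<bullet> (G' - G)" by metis
  then have "(G' - G) \<bullet> (G' - G) = 0" by (simp add: inner_diff_left)
  then show "G' = G" by simp
qed

lemma grad_pop_loss:
  fixes Q :: "real^'n^'n" and W :: "real^'m^'n" and w :: "real^'n"
  defines "S \<equiv> psd_sqrt Q"
  defines "K \<equiv> transpose S ** outer w w ** S - (transpose S ** W) ** transpose (transpose S ** W)"
  shows "grad (pop_loss \<sigma> Q w) W = (- (4 * trace K)) *\<^sub>R (S ** transpose S ** W) - 8 *\<^sub>R (S ** K ** transpose S ** W)"
proof (rule grad_eq)
  define C where "C = transpose S ** outer w w ** S"
  have Csym: "transpose C = C" unfolding C_def
    by (simp add: matrix_transpose_mul transpose_outer matrix_mul_assoc)
  have fe: "pop_loss \<sigma> Q w = (\<lambda>W. (trace (C - (transpose S ** W) ** transpose (transpose S ** W)))^2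
      + 2 * ((C - (transpose S ** W) ** transpose (transpose S ** W)) \<bullet> (C - (transpose S ** W) ** transpose (transpose S ** W))) + \<sigma>\<^sup>2)"
    unfolding C_def S_def by (rule ext) (rule pop_loss_closed)
  show "(pop_loss \<sigma> Q w has_derivative (\<lambda>h. ((- (4 * trace K)) *\<^sub>R (S ** transpose S ** W) - 8 *\<^sub>R (S ** K ** transpose S ** W)) \<bullet> h)) (at W)"
    unfolding fe K_def C_def[symmetric] using loss_deriv[OF Csym, where S=S and W=W and s="\<sigma>\<^sup>2"] by simp
qed

lemma transpose_neg: "transpose (- X) = - transpose (X::real^'m^'n)"
  by (simp add: transpose_def vec_eq_iff)

lemma bl_tmv: "bounded_linear (\<lambda>X::real^'m^'n. transpose X *v e)"
  by (rule linear_conv_bounded_linear[THEN iffD1])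
     (auto simp: linear_iff transpose_def matrix_vector_mult_def vec_eq_iff sum.distrib sum_distrib_left algebra_simps
       simp del: transpose_matrix_vector)

lemma coord_deriv:
  fixes W :: "real \<Rightarrow> real^'m^'n" and e :: "real^'n"
  assumes "(W has_vector_derivative W') (at t)"
  shows "((\<lambda>s. e \<bullet> ((W s ** transpose (W s)) *v e)) has_real_derivative
           2 * ((transpose (W t) *v e) \<bullet> (transpose W' *v e))) (at t)"
proof -
  define y where "y = (\<lambda>s. transpose (W s) *v e)"
  have yd: "(y has_vector_derivative (transpose W' *v e)) (at t)"
    unfolding y_def using bounded_linear.has_vector_derivative[OF bl_tmv assms] .
  have eq: "e \<bullet> ((W s ** transpose (W s)) *v e) = y s \<bullet> y s" for s
  proof -
    have "(W s ** transpose (W s)) *v e = W s *v (transpose (W s) *v e)"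
      by (simp only: matrix_vector_mul_assoc)
    then show ?thesis unfolding y_def using inner_T[of e "W s" "transpose (W s) *v e"] by simp
  qed
  have "((\<lambda>s. y s \<bullet> y s) has_derivative (\<lambda>h. y t \<bullet> (h *\<^sub>R (transpose W' *v e)) + (h *\<^sub>R (transpose W' *v e)) \<bullet> y t)) (at t)"
    using has_derivative_inner[OF yd[unfolded has_vector_derivative_def] yd[unfolded has_vector_derivative_def]] .
  then have d: "((\<lambda>s. y s \<bullet> y s) has_derivative (\<lambda>h. (2 * ((transpose (W t) *v e) \<bullet> (transpose W' *v e))) * h)) (at t)"
    by (rule has_derivative_eq_rhs) (auto simp: fun_eq_iff inner_commute algebra_simps y_def)
  have ef: "(\<lambda>s. e \<bullet> ((W s ** transpose (W s)) *v e)) = (\<lambda>s. y s \<bullet> y s)" using eq by auto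
  show ?thesis unfolding has_field_derivative_def ef using d .
qed

lemma sgn_sqrt_coef: assumes "m \<ge> 0" shows "-2 * (sgn g / sqrt m) * m = -2 * sgn g * sqrt m"
proof (cases "m = 0")
  case False
  then have "m / sqrt m = sqrt m" using assms real_div_sqrt by blast
  then show ?thesis by (metis mult.assoc times_divide_eq_left times_divide_eq_right)
qed simp

context ON begin

lemma comp_deriv:
  fixes W :: "real \<Rightarrow> real^'m^'n" and e :: "real^'n" and f :: "real \<Rightarrow> real"
  assumes Wd: "(W has_vector_derivative - (P3 w v x y z ** W t)) (at t)"
    and De: "P3 w v x y z *v e = s *\<^sub>R e"
    and Me: "(W t ** transpose (W t)) *v e = m *\<^sub>R e" and ee: "e \<bullet> e = 1"
    and T: "open T" "t \<in> T" and fe: "\<And>s. s \<in> T \<Longrightarrow> e \<bullet> ((W s ** transpose (W s)) *v e) = f s"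
  shows "(f has_real_derivative (-2 * s * m)) (at t)"
proof -
  have "transpose (- (P3 w v x y z ** W t)) *v e = - (s *\<^sub>R (transpose (W t) *v e))"
  proof -
    have "transpose (- (P3 w v x y z ** W t)) *v e = - ((transpose (W t) ** P3 w v x y z) *v e)"
      by (simp add: transpose_neg matrix_transpose_mul P3_transpose matrix_vector_mult_def vec_eq_iff sum_negf
          del: transpose_matrix_vector)
    also have "\<dots> = - (transpose (W t) *v (s *\<^sub>R e))"
      by (simp only: matrix_vector_mul_assoc[symmetric] De)
    also have "\<dots> = - (s *\<^sub>R (transpose (W t) *v e))"
      by (simp add: matrix_vector_mult_scaleR del: transpose_matrix_vector)
    finally show ?thesis .
  qed
  moreover have "(transpose (W t) *v e) \<bullet> (transpose (W t) *v e) = m"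
  proof -
    have "(transpose (W t) *v e) \<bullet> (transpose (W t) *v e) = e \<bullet> (W t *v (transpose (W t) *v e))"
      using inner_T[of e "W t" "transpose (W t) *v e"] by simp
    also have "\<dots> = e \<bullet> ((W t ** transpose (W t)) *v e)" by (simp only: matrix_vector_mul_assoc)
    also have "\<dots> = m" using Me ee by simp
    finally show ?thesis .
  qed
  ultimately have "((\<lambda>s. e \<bullet> ((W s ** transpose (W s)) *v e)) has_real_derivative (-2 * s * m)) (at t)"
    using coord_deriv[OF Wd, of e] by (simp add: inner_minus_right mult.assoc)
  then show ?thesis using has_field_derivative_transform_within_open[OF _ T] fe by blast
qed

end

theorem proposition5p2:
  fixes lam \<sigma> :: real
    and wstar v :: "real^'n"
    and W :: "real \<Rightarrow> real^'m^'n"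
    and a b c :: "real \<Rightarrow> real"
    and T :: "real set"
  assumes d3: "CARD('n) \<ge> 3"
    and md: "CARD('m) = CARD('n)"
    and lampos: "lam > 0"
    and nw: "norm wstar = 1" and nv: "norm v = 1" and orth: "v \<bullet> wstar = 0"
    and T: "open T"
    and flow: "\<And>t. t \<in> T \<Longrightarrow>
       (W has_vector_derivative
          (- polar (grad (pop_loss \<sigma> (mat 1 + lam *\<^sub>R outer v v) wstar) (W t)))) (at t)"
    and form: "\<And>t. t \<in> T \<Longrightarrow>
       W t ** transpose (W t) =
         a t *\<^sub>R outer wstar wstar + b t *\<^sub>R outer v v
         + c t *\<^sub>R (mat 1 - outer wstar wstar - outer v v)"
    and nonneg: "\<And>t. t \<in> T \<Longrightarrow> a t \<ge> 0 \<and> b t \<ge> 0 \<and> c t \<ge> 0"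
  shows "\<forall>t\<in>T.
     (let r = a t + (1 + lam) * b t + (real CARD('n) - 2) * c t;
          gw = 8 * (a t - 1) + 4 * (r - 1);
          gv = 8 * (1 + lam)\<^sup>2 * b t + 4 * (1 + lam) * (r - 1);
          gp = 8 * c t + 4 * (r - 1)
      in (a has_real_derivative (- 2 * sgn gw * sqrt (a t))) (at t)
       \<and> (b has_real_derivative (- 2 * sgn gv * sqrt (b t))) (at t)
       \<and> (c has_real_derivative (- 2 * sgn gp * sqrt (c t))) (at t))"
proof (intro ballI)
  fix t assume tT: "t \<in> T"
  have ww: "wstar \<bullet> wstar = 1" using nw by (metis power2_norm_eq_inner power_one)
  have vv: "v \<bullet> v = 1" using nv by (metis power2_norm_eq_inner power_one)
  have wv: "wstar \<bullet> v = 0" using orth by (simp add: inner_commute)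
  interpret ON wstar v using ww vv wv by unfold_locales
  define r where "r = a t + (1 + lam) * b t + (real CARD('n) - 2) * c t"
  define gw where "gw = 8 * (a t - 1) + 4 * (r - 1)"
  define gv where "gv = 8 * (1 + lam)\<^sup>2 * b t + 4 * (1 + lam) * (r - 1)"
  define gp where "gp = 8 * c t + 4 * (r - 1)"
  define sl where "sl = sqrt (1 + lam)"
  have sl2: "sl * sl = 1 + lam" using lampos by (simp add: sl_def)
  have sl0: "sl \<ge> 0" using lampos by (simp add: sl_def)
  have lam_eq: "lam = sl * sl - 1" using sl2 by simp
  have Meq: "\<And>s. s \<in> T \<Longrightarrow> W s ** transpose (W s) = P3 wstar v (a s) (b s) (c s)"
    using form by (simp add: P3_def)
  have Qeq: "mat 1 + lam *\<^sub>R outer v v = P3 wstar v 1 (1+lam) 1"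
    by (simp add: P3_def algebra_simps)
  define S where "S = P3 wstar v 1 sl 1"
  have Seq: "psd_sqrt (mat 1 + lam *\<^sub>R outer v v) = S"
    unfolding Qeq S_def by (rule psd_sqrt_eq) (auto intro: P3_psd simp: sl0 P3_mult sl2)
  have St: "transpose S = S" unfolding S_def by (rule P3_transpose)
  define W0 where "W0 = W t"
  have M: "W0 ** transpose W0 = P3 wstar v (a t) (b t) (c t)" using Meq[OF tT] by (simp add: W0_def)
  have nn: "a t \<ge> 0" "b t \<ge> 0" "c t \<ge> 0" using nonneg[OF tT] by auto
  define K where "K = transpose S ** outer wstar wstar ** S - (transpose S ** W0) ** transpose (transpose S ** W0)"
  have Keq: "K = P3 wstar v (1 - a t) (- (sl * b t * sl)) (- c t)"
  proof -
    have "(transpose S ** W0) ** transpose (transpose S ** W0) = S ** (W0 ** transpose W0) ** S"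
      by (simp add: St matrix_transpose_mul matrix_mul_assoc)
    moreover have "outer wstar wstar = P3 wstar v 1 0 0" by (simp add: P3_def)
    ultimately show ?thesis unfolding K_def M St unfolding S_def by (simp add: P3_mult P3_diff)
  qed
  have trK: "trace K = 1 - r"
    unfolding Keq P3_trace r_def lam_eq by (simp add: algebra_simps)
  have G: "grad (pop_loss \<sigma> (mat 1 + lam *\<^sub>R outer v v) wstar) W0 = P3 wstar v gw gv gp ** W0"
  proof -
    have "grad (pop_loss \<sigma> (mat 1 + lam *\<^sub>R outer v v) wstar) W0
        = (- (4 * trace K)) *\<^sub>R (S ** transpose S ** W0) - 8 *\<^sub>R (S ** K ** transpose S ** W0)"
      unfolding K_def using grad_pop_loss[of \<sigma> "mat 1 + lam *\<^sub>R outer v v" wstar W0] unfolding Seq .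
    also have "\<dots> = ((- (4 * trace K)) *\<^sub>R (S ** S) - 8 *\<^sub>R (S ** K ** S)) ** W0"
      by (simp add: St matrix_diff_rdistrib scalar_matrix_assoc)
    also have "\<dots> = P3 wstar v (- (4 * (1 - r)) - 8 * (1 - a t)) (- (4 * (1 - r)) * (sl * sl) - 8 * (sl * (- (sl * b t * sl)) * sl)) (- (4 * (1 - r)) - 8 * (- c t)) ** W0"
      unfolding trK by (simp add: Keq S_def P3_mult P3_scale P3_diff)
    also have "\<dots> = P3 wstar v gw gv gp ** W0"
    proof -
      have "- (4 * (1 - r)) - 8 * (1 - a t) = gw" unfolding gw_def by simp
      moreover have "- (4 * (1 - r)) * (sl * sl) - 8 * (sl * (- (sl * b t * sl)) * sl) = gv"
        unfolding gv_def lam_eq by (simp add: power2_eq_square algebra_simps)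
      moreover have "- (4 * (1 - r)) - 8 * (- c t) = gp" unfolding gp_def by simp
      ultimately show ?thesis by simp
    qed
    finally show ?thesis .
  qed
  define sw where "sw = sgn gw / sqrt (a t)"
  define sv where "sv = sgn gv / sqrt (b t)"
  define sp where "sp = sgn gp / sqrt (c t)"
  have Wd: "(W has_vector_derivative - (P3 wstar v sw sv sp ** W t)) (at t)"
  proof -
    have Wd0: "(W has_vector_derivative - polar (grad (pop_loss \<sigma> (mat 1 + lam *\<^sub>R outer v v) wstar) W0)) (at t)"
      unfolding W0_def by (rule flow[OF tT])
    have "(W has_vector_derivative - (P3 wstar v sw sv sp ** W0)) (at t)"
      using Wd0 unfolding G polar_P3[OF M nn] sw_def sv_def sp_def .
    then show ?thesis unfolding W0_def .
  qed
  obtain u :: "real^'n" where uw: "u \<bullet> wstar = 0" and uv: "u \<bullet> v = 0" and uu: "u \<bullet> u = 1"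
  proof -
    have "dim {wstar, v} \<le> card {wstar, v}" by (rule dim_le_card') simp
    also have "\<dots> \<le> 2" by (simp add: card_insert_if)
    also have "\<dots> < DIM(real^'n)" using d3 by simp
    finally have "dim {wstar, v} < DIM(real^'n)" .
    then obtain x :: "real^'n" where x0: "x \<noteq> 0" and xo: "\<And>y. y \<in> span {wstar, v} \<Longrightarrow> orthogonal x y"
      by (rule orthogonal_to_subspace_exists) auto
    define u where "u = (1 / norm x) *\<^sub>R x"
    have "orthogonal x wstar" "orthogonal x v" using xo by (auto intro: span_base)
    then have "u \<bullet> wstar = 0" "u \<bullet> v = 0" unfolding u_def orthogonal_def by auto
    moreover have "u \<bullet> u = 1" unfolding u_def using x0
      by (simp add: power2_norm_eq_inner[symmetric] power2_eq_square)
    ultimately show ?thesis using that by blast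
  qed
  have da: "(a has_real_derivative (-2 * sw * a t)) (at t)"
  proof (rule comp_deriv[OF Wd])
    show "P3 wstar v sw sv sp *v wstar = sw *\<^sub>R wstar" by (rule P3_w)
    show "(W t ** transpose (W t)) *v wstar = a t *\<^sub>R wstar" using Meq[OF tT] by (simp add: P3_w)
    show "wstar \<bullet> wstar = 1" by (rule ww)
    show "open T" "t \<in> T" by (rule T) (rule tT)
    fix s assume "s \<in> T" then show "wstar \<bullet> ((W s ** transpose (W s)) *v wstar) = a s"
      using Meq by (simp add: P3_w ww)
  qed
  have db: "(b has_real_derivative (-2 * sv * b t)) (at t)"
  proof (rule comp_deriv[OF Wd])
    show "P3 wstar v sw sv sp *v v = sv *\<^sub>R v" by (rule P3_v)
    show "(W t ** transpose (W t)) *v v = b t *\<^sub>R v" using Meq[OF tT] by (simp add: P3_v)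
    show "v \<bullet> v = 1" by (rule vv)
    show "open T" "t \<in> T" by (rule T) (rule tT)
    fix s assume "s \<in> T" then show "v \<bullet> ((W s ** transpose (W s)) *v v) = b s"
      using Meq by (simp add: P3_v vv)
  qed
  have dc: "(c has_real_derivative (-2 * sp * c t)) (at t)"
  proof (rule comp_deriv[OF Wd])
    show "P3 wstar v sw sv sp *v u = sp *\<^sub>R u" by (rule P3_u[OF uw uv])
    show "(W t ** transpose (W t)) *v u = c t *\<^sub>R u" using Meq[OF tT] by (simp add: P3_u[OF uw uv])
    show "u \<bullet> u = 1" by (rule uu)
    show "open T" "t \<in> T" by (rule T) (rule tT)
    fix s assume "s \<in> T" then show "u \<bullet> ((W s ** transpose (W s)) *v u) = c s"
      using Meq by (simp add: P3_u[OF uw uv] uu)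
  qed
  show "let r = a t + (1 + lam) * b t + (real CARD('n) - 2) * c t;
          gw = 8 * (a t - 1) + 4 * (r - 1);
          gv = 8 * (1 + lam)\<^sup>2 * b t + 4 * (1 + lam) * (r - 1);
          gp = 8 * c t + 4 * (r - 1)
      in (a has_real_derivative (- 2 * sgn gw * sqrt (a t))) (at t)
       \<and> (b has_real_derivative (- 2 * sgn gv * sqrt (b t))) (at t)
       \<and> (c has_real_derivative (- 2 * sgn gp * sqrt (c t))) (at t)"
    unfolding Let_def r_def[symmetric] gw_def[symmetric] gv_def[symmetric] gp_def[symmetric]
    using da db dc unfolding sw_def sv_def sp_def sgn_sqrt_coef[OF nn(1)] sgn_sqrt_coef[OF nn(2)] sgn_sqrt_coef[OF nn(3)]
    by blast
qed

end
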